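(* Let $q$ be a prime with $q \equiv 3 \pmod 4$, and let $C_1 > \sqrt[4]{2}$. Suppose $E \subset \mathbb{F}_q^2$ satisfies $|E| > C_1 q^{7/4}$. Then there exists $C_2 > 0$ depending only on $C_1$ such that $|T_2(E)| \ge C_2 q^3$, where $T_2(E)$ is the set of congruence classes of triangles determined by $E$.
   Context: For $x=(x_1,x_2), y=(y_1,y_2) \in \mathbb{F}_q^2$ the "distance" is $\|x-y\| = (x_1-y_1)^2+(x_2-y_2)^2 \in \mathbb{F}_q$. A triangle determined by $E$ is a triple $(x^1,x^2,x^3)$ of points of $E$. Two triples $(x^1,x^2,x^3)$ and $(y^1,y^2,y^3)$ of points of $\mathbb{F}_q^2$ are congruent if there exist $\theta \in O_2(\mathbb{F}_q)$ (the group of $2\times 2$ matrices $A$ over $\mathbb{F}_q$ with $A^TA=I$) and $\tau \in \mathbb{F}_q^2$ such that $y^j = \theta x^j + \tau$ for $j=1,2,3$. $T_2(E)$ is the set of congruence classes (among all triples in $\mathbb{F}_q^2$) containing at least one triangle with vertices in $E$. *)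

theory Defs
  imports Complex_Main "HOL-Computational_Algebra.Primes"
begin

text \<open>The prime field F_q is modelled by the residues {0..q-1} (as integers) with
  arithmetic mod q.  Points of F_q^2 are pairs of residues.\<close>

definition Fq :: "nat \<Rightarrow> int set" where
  "Fq q = {0..<int q}"

definition plane :: "nat \<Rightarrow> (int \<times> int) set" where
  "plane q = Fq q \<times> Fq q"

definition fdist :: "nat \<Rightarrow> int \<times> int \<Rightarrow> int \<times> int \<Rightarrow> int" where
  "fdist q x y = ((fst x - fst y)^2 + (snd x - snd y)^2) mod int q"

text \<open>O_2(F_q): matrices A = [[a,b],[c,d]] over F_q with A^T A = I.\<close>
definition O2 :: "nat \<Rightarrow> (int \<times> int \<times> int \<times> int) set" where
  "O2 q = {(a,b,c,d). a \<in> Fq q \<and> b \<in> Fq q \<and> c \<in> Fq q \<and> d \<in> Fq q \<and>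
      (a*a + c*c) mod int q = 1 mod int q \<and>
      (b*b + d*d) mod int q = 1 mod int q \<and>
      (a*b + c*d) mod int q = 0}"

definition rigid_app :: "nat \<Rightarrow> int \<times> int \<times> int \<times> int \<Rightarrow> int \<times> int \<Rightarrow> int \<times> int \<Rightarrow> int \<times> int" where
  "rigid_app q \<theta> \<tau> x = (case \<theta> of (a,b,c,d) \<Rightarrow>
      ((a * fst x + b * snd x + fst \<tau>) mod int q, (c * fst x + d * snd x + snd \<tau>) mod int q))"

type_synonym tri = "(int \<times> int) \<times> (int \<times> int) \<times> (int \<times> int)"

definition triples :: "nat \<Rightarrow> tri set" where
  "triples q = plane q \<times> plane q \<times> plane q"

definition congruent :: "nat \<Rightarrow> tri \<Rightarrow> tri \<Rightarrow> bool" where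
  "congruent q s t \<longleftrightarrow> (\<exists>\<theta>\<in>O2 q. \<exists>\<tau>\<in>plane q.
      (case s of (x1,x2,x3) \<Rightarrow> case t of (y1,y2,y3) \<Rightarrow>
        y1 = rigid_app q \<theta> \<tau> x1 \<and> y2 = rigid_app q \<theta> \<tau> x2 \<and> y3 = rigid_app q \<theta> \<tau> x3))"

definition cong_class :: "nat \<Rightarrow> tri \<Rightarrow> tri set" where
  "cong_class q t = {s \<in> triples q. congruent q t s}"

definition T2 :: "nat \<Rightarrow> (int \<times> int) set \<Rightarrow> tri set set" where
  "T2 q E = {C \<in> cong_class q ` triples q. \<exists>t\<in>C. t \<in> E \<times> E \<times> E}"

end

theory Submission
  imports Defs "HOL-Number_Theory.Residues"
begin

lemma card_le2:
  assumes "finite S" "\<And>x y z. x \<in> S \<Longrightarrow> y \<in> S \<Longrightarrow> z \<in> S \<Longrightarrow> x \<noteq> y \<Longrightarrow> x \<noteq> z \<Longrightarrow> y \<noteq> z \<Longrightarrow> False"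
  shows "card S \<le> 2"
proof (rule ccontr)
  assume "\<not> card S \<le> 2"
  then have "3 \<le> card S" by simp
  then obtain x y z where "x \<in> S" "y \<in> S" "z \<in> S" "x \<noteq> y" "x \<noteq> z" "y \<noteq> z"
    using card_le_Suc_iff[of 2 S] by (auto simp: numeral_3_eq_3 card_le_Suc_iff) 
  then show False using assms(2) by blast
qed

lemma fermat_int:
  fixes b :: int
  assumes "prime q" "\<not> int q dvd b"
  shows "[b ^ (q - 1) = 1] (mod int q)"
proof -
  define c where "c = nat (b mod int q)"
  have qpos: "int q > 0" using assms(1) prime_gt_0_nat by simp
  have ci: "int c = b mod int q" using qpos by (simp add: c_def)
  have "\<not> q dvd c"
  proof
    assume "q dvd c"
    then have "int q dvd int c" by simp
    then have "int q dvd b mod int q" using ci by simp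
    then show False using assms(2) by (simp add: dvd_mod_iff)
  qed
  then have "[c ^ (q - 1) = 1] (mod q)" using fermat_theorem assms(1) by blast
  then have "[int c ^ (q - 1) = 1] (mod int q)"
    using cong_int_iff[of "c ^ (q-1)" 1 q] by simp
  moreover have "[b ^ (q - 1) = int c ^ (q - 1)] (mod int q)"
    by (rule cong_pow) (simp add: ci cong_def)
  ultimately show ?thesis using cong_trans by blast
qed

lemma noniso1:
  fixes x y :: int
  assumes "prime q" "q mod 4 = 3" "int q dvd x^2 + y^2"
  shows "int q dvd x"
proof (rule ccontr)
  assume nx: "\<not> int q dvd x"
  have pq: "prime (int q)" using assms(1) by simp
  have ny: "\<not> int q dvd y"
  proof
    assume "int q dvd y"
    then have "int q dvd y^2" by (simp add: power2_eq_square)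
    then have "int q dvd x^2" using assms(3) by (metis dvd_add_right_iff add.commute)
    then show False using nx pq prime_dvd_power by blast
  qed
  define k where "k = (q - 1) div 2"
  have qk: "q - 1 = 2 * k" using assms(2) unfolding k_def by presburger
  have ok: "odd k" using assms(2) unfolding k_def by presburger
  have "[x^2 = - (y^2)] (mod int q)" using assms(3)
    by (simp add: cong_iff_dvd_diff)
  then have "[(x^2)^k = (- (y^2))^k] (mod int q)" by (rule cong_pow)
  moreover have "(- (y^2))^k = - (y^(q-1))" using ok qk by (simp add: power_mult)
  moreover have "(x^2)^k = x^(q-1)" using qk by (simp add: power_mult)
  ultimately have "[x^(q-1) = - (y^(q-1))] (mod int q)" by simp
  moreover have "[x^(q-1) = 1] (mod int q)" using fermat_int assms(1) nx by blast
  moreover have "[- (y^(q-1)) = - 1] (mod int q)" using fermat_int assms(1) ny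
    by (simp add: cong_minus_minus_iff)
  ultimately have "[1 = - 1] (mod int q)" by (meson cong_sym cong_trans)
  then have "int q dvd 2" by (simp add: cong_iff_dvd_diff)
  then have "q dvd 2" by presburger
  then have "q \<le> 2" by (simp add: dvd_imp_le)
  then show False using assms(2) by simp
qed

lemma noniso:
  fixes x y :: int
  assumes "prime q" "q mod 4 = 3" "int q dvd x^2 + y^2"
  shows "int q dvd x \<and> int q dvd y"
  using noniso1[OF assms] noniso1[OF assms(1,2), of y x] assms(3) by (simp add: add.commute)

lemma Fq_dvd_eq:
  assumes "a \<in> Fq q" "b \<in> Fq q" "int q dvd a - b"
  shows "a = b"
proof -
  have "a mod int q = a" "b mod int q = b" using assms(1,2) by (auto simp: Fq_def)
  then show ?thesis using assms(3) by (metis mod_eq_dvd_iff)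
qed

lemma finite_Fq[simp]: "finite (Fq q)" by (simp add: Fq_def)

definition lcset :: "nat \<Rightarrow> int \<Rightarrow> int \<Rightarrow> int \<Rightarrow> (int \<times> int) set" where
  "lcset q s t h = {(a,c) \<in> Fq q \<times> Fq q. int q dvd (a*s + c*t - h) \<and> int q dvd (a*a + c*c - 1)}"

lemma lcset_key:
  assumes "(a,c) \<in> lcset q s t h"
  shows "int q dvd (s^2+t^2)*a^2 - 2*h*s*a + h^2 - t^2"
proof -
  have d1: "int q dvd (a*s + c*t - h)" and d2: "int q dvd (a*a + c*c - 1)"
    using assms by (auto simp: lcset_def)
  have "(s^2+t^2)*a^2 - 2*h*s*a + h^2 - t^2 = t^2 * (a*a + c*c - 1) + (a*s - h - c*t) * (a*s + c*t - h)"
    by (simp add: algebra_simps power2_eq_square)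
  then show ?thesis using d1 d2 by (metis dvd_add dvd_mult dvd_mult2)
qed

lemma lcset_t:
  assumes "prime q" "q mod 4 = 3" "\<not> int q dvd t"
  shows "card (lcset q s t h) \<le> 2"
proof (rule card_le2)
  show "finite (lcset q s t h)"
    by (rule finite_subset[of _ "Fq q \<times> Fq q"]) (auto simp: lcset_def)
  have pq: "prime (int q)" using assms(1) by simp
  have samea: "c = c'" if "(a,c) \<in> lcset q s t h" "(a,c') \<in> lcset q s t h" for a c c'
  proof -
    have "int q dvd (a*s + c*t - h)" "int q dvd (a*s + c'*t - h)" using that by (auto simp: lcset_def)
    then have "int q dvd (a*s + c*t - h) - (a*s + c'*t - h)" by (rule dvd_diff)
    moreover have "(a*s + c*t - h) - (a*s + c'*t - h) = t * (c - c')" by (simp add: algebra_simps)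
    ultimately have "int q dvd t * (c - c')" by simp
    then have "int q dvd c - c'" using assms(3) pq prime_dvd_mult_iff by blast
    then show ?thesis using that Fq_dvd_eq by (auto simp: lcset_def)
  qed
  define \<sigma> where "\<sigma> = s^2 + t^2"
  have pair: "int q dvd \<sigma> * (a + a') - 2*h*s"
    if "(a,c) \<in> lcset q s t h" "(a',c') \<in> lcset q s t h" "a \<noteq> a'" for a c a' c'
  proof -
    have "int q dvd ((s^2+t^2)*a^2 - 2*h*s*a + h^2 - t^2) - ((s^2+t^2)*a'^2 - 2*h*s*a' + h^2 - t^2)"
      using lcset_key[OF that(1)] lcset_key[OF that(2)] by (rule dvd_diff)
    moreover have "((s^2+t^2)*a^2 - 2*h*s*a + h^2 - t^2) - ((s^2+t^2)*a'^2 - 2*h*s*a' + h^2 - t^2)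
       = (a - a') * (\<sigma> * (a + a') - 2*h*s)" by (simp add: \<sigma>_def algebra_simps power2_eq_square)
    ultimately have "int q dvd (a - a') * (\<sigma> * (a + a') - 2*h*s)" by simp
    moreover have "\<not> int q dvd (a - a')"
      using that Fq_dvd_eq by (auto simp: lcset_def)
    ultimately show ?thesis using pq prime_dvd_mult_iff by blast
  qed
  have nsig: "\<not> int q dvd \<sigma>" using noniso[OF assms(1,2), of s t] assms(3) by (auto simp: \<sigma>_def)
  fix x y z assume xyz: "x \<in> lcset q s t h" "y \<in> lcset q s t h" "z \<in> lcset q s t h"
    "x \<noteq> y" "x \<noteq> z" "y \<noteq> z"
  obtain a1 c1 a2 c2 a3 c3 where e: "x = (a1,c1)" "y = (a2,c2)" "z = (a3,c3)" by (cases x, cases y, cases z) auto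
  have n12: "a1 \<noteq> a2" using samea xyz e by blast
  have n13: "a1 \<noteq> a3" using samea xyz e by blast
  have n23: "a2 \<noteq> a3" using samea xyz e by blast
  have "int q dvd (\<sigma> * (a1 + a2) - 2*h*s) - (\<sigma> * (a1 + a3) - 2*h*s)"
  proof (rule dvd_diff)
    show "int q dvd \<sigma> * (a1 + a2) - 2*h*s" using pair[of a1 c1 a2 c2] xyz e n12 by auto
    show "int q dvd \<sigma> * (a1 + a3) - 2*h*s" using pair[of a1 c1 a3 c3] xyz e n13 by auto
  qed
  moreover have "(\<sigma> * (a1 + a2) - 2*h*s) - (\<sigma> * (a1 + a3) - 2*h*s) = \<sigma> * (a2 - a3)"
    by (simp add: algebra_simps)
  ultimately have "int q dvd \<sigma> * (a2 - a3)" by simp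
  then have "int q dvd a2 - a3" using nsig pq prime_dvd_mult_iff by blast
  then show False using Fq_dvd_eq xyz e n23 by (auto simp: lcset_def)
qed

lemma lcset_card:
  assumes "prime q" "q mod 4 = 3" "\<not> (int q dvd s \<and> int q dvd t)"
  shows "card (lcset q s t h) \<le> 2"
proof (cases "int q dvd t")
  case False
  then show ?thesis using lcset_t assms by blast
next
  case True
  then have ns: "\<not> int q dvd s" using assms(3) by blast
  have "lcset q s t h = (\<lambda>(c,a). (a,c)) ` lcset q t s h"
  proof (rule subset_antisym; rule subsetI)
    fix x assume "x \<in> lcset q s t h"
    then obtain a c where x: "x = (a,c)" "(a,c) \<in> lcset q s t h" by (cases x) auto
    then have "(c,a) \<in> lcset q t s h" by (auto simp: lcset_def add.commute)
    then show "x \<in> (\<lambda>(c,a). (a,c)) ` lcset q t s h" using x by force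
  next
    fix x assume "x \<in> (\<lambda>(c,a). (a,c)) ` lcset q t s h"
    then obtain a c where x: "x = (a,c)" "(c,a) \<in> lcset q t s h" by auto
    then show "x \<in> lcset q s t h"
      by (auto simp: lcset_def add.commute)
  qed
  then have "card (lcset q s t h) \<le> card (lcset q t s h)"
  proof -
    have "finite (lcset q t s h)"
      by (rule finite_subset[of _ "Fq q \<times> Fq q"]) (auto simp: lcset_def)
    then show ?thesis using card_image_le by (metis \<open>lcset q s t h = _\<close>)
  qed
  also have "\<dots> \<le> 2" using lcset_t[OF assms(1,2) ns] by blast
  finally show ?thesis .
qed

lemma not_dvd1: "prime q \<Longrightarrow> \<not> int q dvd 1"
  using prime_gt_1_nat[of q] by (auto simp: zdvd1_eq)

lemma finite_lcset[simp]: "finite (lcset q s t h)"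
  by (rule finite_subset[of _ "Fq q \<times> Fq q"]) (auto simp: lcset_def)

lemma card_Fq[simp]: "card (Fq q) = q" by (simp add: Fq_def)

lemma mod_eq_1_dvd: "((x::int) mod int q = 1 mod int q) \<longleftrightarrow> int q dvd x - 1"
  by (simp add: mod_eq_dvd_iff)

definition circ :: "nat \<Rightarrow> (int \<times> int) set" where
  "circ q = {(a,c) \<in> Fq q \<times> Fq q. int q dvd (a*a + c*c - 1)}"

lemma finite_circ[simp]: "finite (circ q)"
  by (rule finite_subset[of _ "Fq q \<times> Fq q"]) (auto simp: circ_def)

lemma circ_card:
  assumes "prime q" "q mod 4 = 3"
  shows "card (circ q) \<le> 2 * q"
proof -
  have "circ q \<subseteq> (\<Union>a\<in>Fq q. lcset q 1 0 a)"
  proof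
    fix x assume "x \<in> circ q"
    then obtain a c where x: "x = (a,c)" "a \<in> Fq q" "c \<in> Fq q" "int q dvd (a*a + c*c - 1)"
      by (auto simp: circ_def)
    then have "x \<in> lcset q 1 0 a" by (auto simp: lcset_def)
    then show "x \<in> (\<Union>a\<in>Fq q. lcset q 1 0 a)" using x by blast
  qed
  then have "card (circ q) \<le> card (\<Union>a\<in>Fq q. lcset q 1 0 a)"
    by (intro card_mono) auto
  also have "\<dots> \<le> (\<Sum>a\<in>Fq q. card (lcset q 1 0 a))" by (rule card_UN_le) simp
  also have "\<dots> \<le> (\<Sum>a\<in>Fq q. 2)"
  proof (rule sum_mono)
    fix a assume "a \<in> Fq q"
    have "\<not> (int q dvd 1 \<and> int q dvd 0)" using not_dvd1[OF assms(1)] by blast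
    then show "card (lcset q 1 0 a) \<le> 2" using lcset_card[OF assms] by blast
  qed
  also have "\<dots> = 2 * q" by simp
  finally show ?thesis .
qed

lemma finite_O2[simp]: "finite (O2 q)"
proof -
  have "O2 q \<subseteq> Fq q \<times> Fq q \<times> Fq q \<times> Fq q" by (auto simp: O2_def)
  then show ?thesis by (rule finite_subset) auto
qed

lemma O2_card:
  assumes "prime q" "q mod 4 = 3"
  shows "card (O2 q) \<le> 4 * q"
proof -
  define f where "f = (\<lambda>(a::int,b::int,c::int,d::int). ((a,c),(b,d)))"
  have inj: "inj_on f (O2 q)" unfolding f_def by (auto simp: inj_on_def)
  have sub: "f ` O2 q \<subseteq> Sigma (circ q) (\<lambda>(a,c). lcset q a c 0)"
  proof (rule image_subsetI)
    fix \<theta> assume "\<theta> \<in> O2 q"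
    then obtain a b c d where th: "\<theta> = (a,b,c,d)" "a \<in> Fq q" "b \<in> Fq q" "c \<in> Fq q" "d \<in> Fq q"
      "(a*a + c*c) mod int q = 1 mod int q" "(b*b + d*d) mod int q = 1 mod int q"
      "(a*b + c*d) mod int q = 0" unfolding O2_def by (cases \<theta>) auto
    have "(a,c) \<in> circ q" using th by (simp add: circ_def mod_eq_1_dvd)
    moreover have "(b,d) \<in> lcset q a c 0" using th
      by (simp add: lcset_def mod_eq_1_dvd mod_eq_0_iff_dvd mult.commute[of b a] mult.commute[of d c])
    ultimately show "f \<theta> \<in> Sigma (circ q) (\<lambda>(a,c). lcset q a c 0)" using th by (simp add: f_def)
  qed
  have "card (O2 q) = card (f ` O2 q)" using inj by (simp add: card_image)
  also have "\<dots> \<le> card (Sigma (circ q) (\<lambda>(a,c). lcset q a c 0))"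
    using sub by (intro card_mono) auto
  also have "\<dots> = (\<Sum>x\<in>circ q. card ((\<lambda>(a,c). lcset q a c 0) x))"
    by (rule card_SigmaI) auto
  also have "\<dots> \<le> (\<Sum>x\<in>circ q. 2)"
  proof (rule sum_mono)
    fix x assume x: "x \<in> circ q"
    obtain a c where xe: "x = (a,c)" by (cases x)
    have "\<not> (int q dvd a \<and> int q dvd c)"
    proof
      assume "int q dvd a \<and> int q dvd c"
      then have "int q dvd a*a + c*c" by auto
      moreover have "int q dvd a*a + c*c - 1" using x xe by (auto simp: circ_def)
      ultimately have "int q dvd (a*a + c*c) - (a*a + c*c - 1)" by (rule dvd_diff)
      then show False using not_dvd1[OF assms(1)] by simp
    qed
    then show "card ((\<lambda>(a,c). lcset q a c 0) x) \<le> 2" using lcset_card[OF assms] xe by auto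
  qed
  also have "\<dots> = 2 * card (circ q)" by simp
  also have "\<dots> \<le> 4 * q" using circ_card[OF assms] by simp
  finally show ?thesis .
qed

definition ee :: "nat \<Rightarrow> int \<Rightarrow> complex" where
  "ee q k = cis (2 * pi * real_of_int k / real q)"

lemma ee_add: "ee q (k + l) = ee q k * ee q l"
  by (simp add: ee_def cis_mult add_divide_distrib distrib_left)

lemma ee_diff: "ee q (k - l) = ee q k * cnj (ee q l)"
  by (simp add: ee_def cis_mult cis_cnj diff_divide_distrib right_diff_distrib)

lemma ee_zero[simp]: "ee q 0 = 1" by (simp add: ee_def)

lemma ee_mult_q:
  assumes "q > 0"
  shows "ee q (int q * m) = 1"
proof -
  have "2 * pi * real_of_int (int q * m) / real q = 2 * pi * real_of_int m"
    using assms by (simp add: field_simps)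
  then show ?thesis by (simp add: ee_def)
qed

lemma ee_periodic:
  assumes "q > 0" "int q dvd k - l"
  shows "ee q k = ee q l"
proof -
  obtain m where "k - l = int q * m" using assms(2) by (auto elim: dvdE)
  then have "k = l + int q * m" by simp
  then show ?thesis using ee_add ee_mult_q[OF assms(1)] by simp
qed

lemma ee_pow: "ee q k ^ n = ee q (k * int n)"
  by (simp add: ee_def DeMoivre field_simps)

lemma ee_neq1:
  assumes "q > 0" "\<not> int q dvd k"
  shows "ee q k \<noteq> 1"
proof
  assume "ee q k = 1"
  then have "cos (2 * pi * real_of_int k / real q) = 1"
    by (simp add: ee_def complex_eq_iff)
  then obtain n :: int where n: "2 * pi * real_of_int k / real q = real_of_int n * 2 * pi"
    by (auto simp: cos_one_2pi_int)
  then have "real_of_int k = real_of_int n * real q" using assms(1)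
    by (simp add: field_simps)
  then have "k = n * int q" by (metis of_int_eq_iff of_int_mult of_int_of_nat_eq)
  then show False using assms(2) by simp
qed

lemma Fq_nat: "Fq q = int ` {..<q}"
proof -
  have "Fq q = int ` {0..<q}" unfolding Fq_def by (simp add: image_int_atLeastLessThan)
  then show ?thesis by (simp add: lessThan_atLeast0)
qed

lemma ee_sum:
  assumes "q > 0"
  shows "(\<Sum>t\<in>Fq q. ee q (k * t)) = (if int q dvd k then of_nat q else 0)"
proof (cases "int q dvd k")
  case True
  have "(\<Sum>t\<in>Fq q. ee q (k * t)) = (\<Sum>t\<in>Fq q. 1)"
  proof (rule sum.cong[OF refl])
    fix t assume "t \<in> Fq q"
    have "ee q (k * t) = ee q 0" by (rule ee_periodic[OF assms]) (use True in simp)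
    then show "ee q (k * t) = 1" by simp
  qed
  then show ?thesis using True by simp
next
  case False
  define z where "z = ee q k"
  have z1: "z \<noteq> 1" using ee_neq1[OF assms False] by (simp add: z_def)
  have "(\<Sum>t\<in>Fq q. ee q (k * t)) = (\<Sum>n<q. ee q (k * int n))"
    unfolding Fq_nat by (subst sum.reindex) (auto simp: inj_on_def)
  also have "\<dots> = (\<Sum>n<q. z ^ n)" by (simp add: z_def ee_pow)
  also have "\<dots> = (z ^ q - 1) / (z - 1)" using z1 by (rule geometric_sum)
  also have "z ^ q = 1" using ee_mult_q[OF assms, of k] by (simp add: z_def ee_pow mult.commute)
  finally show ?thesis using False by simp
qed

lemma sum_plane: "(\<Sum>\<xi>\<in>plane q. f \<xi>) = (\<Sum>a\<in>Fq q. \<Sum>b\<in>Fq q. f (a,b))"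
  unfolding plane_def by (simp add: sum.cartesian_product)

lemma ee_sum2:
  assumes "q > 0"
  shows "(\<Sum>\<xi>\<in>plane q. ee q (fst \<xi> * w1 + snd \<xi> * w2)) =
     (if int q dvd w1 \<and> int q dvd w2 then of_nat q ^ 2 else 0)"
proof -
  have "(\<Sum>\<xi>\<in>plane q. ee q (fst \<xi> * w1 + snd \<xi> * w2)) =
        (\<Sum>a\<in>Fq q. \<Sum>b\<in>Fq q. ee q (w1 * a) * ee q (w2 * b))"
    unfolding sum_plane by (simp add: ee_add mult.commute)
  also have "\<dots> = (\<Sum>a\<in>Fq q. ee q (w1 * a)) * (\<Sum>b\<in>Fq q. ee q (w2 * b))"
    by (simp add: sum_product)
  also have "\<dots> = (if int q dvd w1 \<and> int q dvd w2 then of_nat q ^ 2 else 0)"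
    using ee_sum[OF assms] by (simp add: power2_eq_square)
  finally show ?thesis .
qed

definition BB :: "nat \<Rightarrow> (int \<times> int) set \<Rightarrow> int \<times> int \<Rightarrow> complex" where
  "BB q E \<eta> = (\<Sum>x\<in>E. ee q (fst x * fst \<eta> + snd x * snd \<eta>))"

lemma BB_norm2:
  "complex_of_real (cmod (BB q E \<eta>) ^ 2) =
     (\<Sum>x\<in>E. \<Sum>y\<in>E. ee q (fst \<eta> * (fst x - fst y) + snd \<eta> * (snd x - snd y)))"
proof -
  have "complex_of_real (cmod (BB q E \<eta>) ^ 2) = BB q E \<eta> * cnj (BB q E \<eta>)"
    by (rule complex_norm_square)
  also have "\<dots> = (\<Sum>x\<in>E. \<Sum>y\<in>E. ee q (fst x * fst \<eta> + snd x * snd \<eta>) * cnj (ee q (fst y * fst \<eta> + snd y * snd \<eta>)))"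
    by (simp add: BB_def sum_product cnj_sum)
  also have "\<dots> = (\<Sum>x\<in>E. \<Sum>y\<in>E. ee q (fst \<eta> * (fst x - fst y) + snd \<eta> * (snd x - snd y)))"
    by (simp add: ee_diff[symmetric] algebra_simps)
  finally show ?thesis .
qed

lemma plane_dvd_eq:
  assumes "x \<in> plane q" "y \<in> plane q" "int q dvd fst x - fst y" "int q dvd snd x - snd y"
  shows "x = y"
  using assms Fq_dvd_eq[of "fst x" q "fst y"] Fq_dvd_eq[of "snd x" q "snd y"]
  by (auto simp: plane_def prod_eq_iff)

lemma finite_plane[simp]: "finite (plane q)" by (simp add: plane_def)

lemma plancherel:
  assumes "q > 0" "E \<subseteq> plane q"
  shows "(\<Sum>\<eta>\<in>plane q. cmod (BB q E \<eta>) ^ 2) = real q ^ 2 * real (card E)"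
proof -
  have fE: "finite E" using finite_subset[OF assms(2)] by simp
  have "complex_of_real (\<Sum>\<eta>\<in>plane q. cmod (BB q E \<eta>) ^ 2) =
        (\<Sum>\<eta>\<in>plane q. \<Sum>x\<in>E. \<Sum>y\<in>E. ee q (fst \<eta> * (fst x - fst y) + snd \<eta> * (snd x - snd y)))"
    by (simp only: of_real_sum BB_norm2)
  also have "\<dots> = (\<Sum>x\<in>E. \<Sum>y\<in>E. \<Sum>\<eta>\<in>plane q. ee q (fst \<eta> * (fst x - fst y) + snd \<eta> * (snd x - snd y)))"
    by (subst sum.swap, subst (2) sum.swap, simp)
  also have "\<dots> = (\<Sum>x\<in>E. \<Sum>y\<in>E. if x = y then of_nat q ^ 2 else 0)"
  proof (intro sum.cong refl)
    fix x y assume xy: "x \<in> E" "y \<in> E"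
    show "(\<Sum>\<eta>\<in>plane q. ee q (fst \<eta> * (fst x - fst y) + snd \<eta> * (snd x - snd y))) =
          (if x = y then of_nat q ^ 2 else 0)"
      using ee_sum2[OF assms(1)] plane_dvd_eq[of x q y] xy assms(2) by auto
  qed
  also have "\<dots> = of_nat q ^ 2 * of_nat (card E)"
    using fE by simp
  also have "\<dots> = complex_of_real (real q ^ 2 * real (card E))" by simp
  finally show ?thesis by (simp only: of_real_eq_iff)
qed

lemma mod_solve:
  assumes "t \<in> Fq q" "y \<in> Fq q"
  shows "((A + t) mod int q = y) \<longleftrightarrow> (t = (y - A) mod int q)"
proof -
  have ym: "y mod int q = y" and tm: "t mod int q = t" using assms by (auto simp: Fq_def)
  have "((A + t) mod int q = y) \<longleftrightarrow> int q dvd (A + t) - y"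
    using ym by (metis mod_eq_dvd_iff)
  also have "\<dots> \<longleftrightarrow> int q dvd t - (y - A)" by (simp add: algebra_simps)
  also have "\<dots> \<longleftrightarrow> t mod int q = (y - A) mod int q" by (simp add: mod_eq_dvd_iff)
  finally show ?thesis using tm by simp
qed

definition tau0 :: "nat \<Rightarrow> int \<times> int \<times> int \<times> int \<Rightarrow> int \<times> int \<Rightarrow> int \<times> int \<Rightarrow> int \<times> int" where
  "tau0 q \<theta> x y = (case \<theta> of (a,b,c,d) \<Rightarrow>
     ((fst y - (a * fst x + b * snd x)) mod int q, (snd y - (c * fst x + d * snd x)) mod int q))"

lemma tau0_plane: "q > 0 \<Longrightarrow> tau0 q \<theta> x y \<in> plane q"
  by (cases \<theta>) (auto simp: tau0_def plane_def Fq_def)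

lemma rig_eq:
  assumes "\<tau> \<in> plane q" "y \<in> plane q"
  shows "rigid_app q \<theta> \<tau> x = y \<longleftrightarrow> \<tau> = tau0 q \<theta> x y"
proof -
  obtain a b c d where th: "\<theta> = (a,b,c,d)" by (cases \<theta>) auto
  have t: "fst \<tau> \<in> Fq q" "snd \<tau> \<in> Fq q" "fst y \<in> Fq q" "snd y \<in> Fq q"
    using assms by (auto simp: plane_def)
  show ?thesis
    using mod_solve[OF t(1) t(3), of "a * fst x + b * snd x"]
          mod_solve[OF t(2) t(4), of "c * fst x + d * snd x"]
    by (auto simp: th rigid_app_def tau0_def prod_eq_iff add.assoc)
qed

definition nu :: "nat \<Rightarrow> (int \<times> int) set \<Rightarrow> int \<times> int \<times> int \<times> int \<Rightarrow> int \<times> int \<Rightarrow> nat" where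
  "nu q E \<theta> \<tau> = card {x\<in>E. rigid_app q \<theta> \<tau> x \<in> E}"

lemma nu_sum:
  assumes "finite E"
  shows "real (nu q E \<theta> \<tau>) = (\<Sum>x\<in>E. \<Sum>y\<in>E. of_bool (rigid_app q \<theta> \<tau> x = y))"
proof -
  have "real (nu q E \<theta> \<tau>) = (\<Sum>x\<in>E. of_bool (rigid_app q \<theta> \<tau> x \<in> E))"
    unfolding nu_def using assms by (simp add: sum.If_cases of_bool_def Int_def)
  also have "\<dots> = (\<Sum>x\<in>E. \<Sum>y\<in>E. of_bool (rigid_app q \<theta> \<tau> x = y))"
    using assms by (intro sum.cong refl) (simp add: of_bool_def sum.delta)
  finally show ?thesis .
qed

lemma sum_tau_ind:
  assumes "q > 0" "y \<in> plane q"
  shows "(\<Sum>\<tau>\<in>plane q. of_bool (rigid_app q \<theta> \<tau> x = y) * f \<tau>) = (f (tau0 q \<theta> x y) :: 'a::comm_ring_1)"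
proof -
  have "(\<Sum>\<tau>\<in>plane q. of_bool (rigid_app q \<theta> \<tau> x = y) * f \<tau>) =
        (\<Sum>\<tau>\<in>plane q. if \<tau> = tau0 q \<theta> x y then f \<tau> else 0)"
    by (intro sum.cong refl) (simp add: rig_eq[OF _ assms(2)])
  also have "\<dots> = f (tau0 q \<theta> x y)" using tau0_plane[OF assms(1)] by (simp add: sum.delta')
  finally show ?thesis .
qed

lemma nu_first:
  assumes "q > 0" "E \<subseteq> plane q"
  shows "(\<Sum>\<tau>\<in>plane q. real (nu q E \<theta> \<tau>)) = real (card E) ^ 2"
proof -
  have fE: "finite E" using finite_subset[OF assms(2)] by simp
  have "(\<Sum>\<tau>\<in>plane q. real (nu q E \<theta> \<tau>)) =
        (\<Sum>\<tau>\<in>plane q. \<Sum>x\<in>E. \<Sum>y\<in>E. of_bool (rigid_app q \<theta> \<tau> x = y) * 1)"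
    using nu_sum[OF fE] by simp
  also have "\<dots> = (\<Sum>x\<in>E. \<Sum>y\<in>E. \<Sum>\<tau>\<in>plane q. of_bool (rigid_app q \<theta> \<tau> x = y) * (1::real))"
    by (subst sum.swap, subst (2) sum.swap, simp)
  also have "\<dots> = (\<Sum>x\<in>E. \<Sum>y\<in>E. (1::real))"
    by (intro sum.cong refl sum_tau_ind[OF assms(1)]) (use assms(2) in auto)
  also have "\<dots> = real (card E) ^ 2" by (simp add: power2_eq_square)
  finally show ?thesis .
qed

lemma nu_second:
  assumes "q > 0" "E \<subseteq> plane q"
  shows "(\<Sum>\<tau>\<in>plane q. real (nu q E \<theta> \<tau>) ^ 2) =
    (\<Sum>x\<in>E. \<Sum>x'\<in>E. \<Sum>y\<in>E. \<Sum>y'\<in>E. of_bool (rigid_app q \<theta> (tau0 q \<theta> x y) x' = y'))"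
proof -
  have fE: "finite E" using finite_subset[OF assms(2)] by simp
  have "(\<Sum>\<tau>\<in>plane q. real (nu q E \<theta> \<tau>) ^ 2) =
    (\<Sum>\<tau>\<in>plane q. \<Sum>x\<in>E. \<Sum>x'\<in>E. \<Sum>y\<in>E. \<Sum>y'\<in>E.
        of_bool (rigid_app q \<theta> \<tau> x = y) * of_bool (rigid_app q \<theta> \<tau> x' = y'))"
    by (simp add: nu_sum[OF fE] power2_eq_square sum_product)
  also have "\<dots> = (\<Sum>x\<in>E. \<Sum>x'\<in>E. \<Sum>y\<in>E. \<Sum>y'\<in>E. \<Sum>\<tau>\<in>plane q.
        of_bool (rigid_app q \<theta> \<tau> x = y) * of_bool (rigid_app q \<theta> \<tau> x' = y'))"
    by (simp only: sum.swap[where A = "plane q"])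
  also have "\<dots> = (\<Sum>x\<in>E. \<Sum>x'\<in>E. \<Sum>y\<in>E. \<Sum>y'\<in>E. of_bool (rigid_app q \<theta> (tau0 q \<theta> x y) x' = y'))"
    by (intro sum.cong refl sum_tau_ind[OF assms(1)]) (use assms(2) in auto)
  finally show ?thesis .
qed

lemma cond_eq:
  assumes "y' \<in> plane q" "\<theta> = (a,b,c,d)"
  shows "rigid_app q \<theta> (tau0 q \<theta> x y) x' = y' \<longleftrightarrow>
    (int q dvd a * (fst x' - fst x) + b * (snd x' - snd x) - (fst y' - fst y) \<and>
     int q dvd c * (fst x' - fst x) + d * (snd x' - snd x) - (snd y' - snd y))"
proof -
  have ym: "fst y' mod int q = fst y'" "snd y' mod int q = snd y'"
    using assms(1) by (auto simp: plane_def Fq_def)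
  have e1: "(a * fst x' + b * snd x' + (fst y - (a * fst x + b * snd x)) mod int q) mod int q
      = (a * fst x' + b * snd x' + (fst y - (a * fst x + b * snd x))) mod int q"
    by (simp add: mod_add_right_eq)
  have e2: "(c * fst x' + d * snd x' + (snd y - (c * fst x + d * snd x)) mod int q) mod int q
      = (c * fst x' + d * snd x' + (snd y - (c * fst x + d * snd x))) mod int q"
    by (simp add: mod_add_right_eq)
  have "rigid_app q \<theta> (tau0 q \<theta> x y) x' = y' \<longleftrightarrow>
     ((a * fst x' + b * snd x' + (fst y - (a * fst x + b * snd x))) mod int q = fst y' mod int q \<and>
      (c * fst x' + d * snd x' + (snd y - (c * fst x + d * snd x))) mod int q = snd y' mod int q)"
    using e1 e2 ym by (auto simp: assms(2) rigid_app_def tau0_def prod_eq_iff)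
  also have "\<dots> \<longleftrightarrow> (int q dvd a * (fst x' - fst x) + b * (snd x' - snd x) - (fst y' - fst y) \<and>
     int q dvd c * (fst x' - fst x) + d * (snd x' - snd x) - (snd y' - snd y))"
    by (simp add: mod_eq_dvd_iff algebra_simps)
  finally show ?thesis .
qed

lemma BB_mod:
  assumes "q > 0"
  shows "BB q E (u1, u2) = BB q E (u1 mod int q, u2 mod int q)"
  unfolding BB_def
proof (intro sum.cong refl ee_periodic[OF assms])
  fix x :: "int \<times> int"
  have "fst x * u1 + snd x * u2 - (fst x * (u1 mod int q) + snd x * (u2 mod int q)) =
        fst x * (u1 - u1 mod int q) + snd x * (u2 - u2 mod int q)" by (simp add: algebra_simps)
  moreover have "int q dvd u1 - u1 mod int q" "int q dvd u2 - u2 mod int q"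
    by (simp_all add: mod_eq_dvd_iff[symmetric])
  ultimately show "int q dvd fst x * fst (u1, u2) + snd x * snd (u1, u2) -
       (fst x * fst (u1 mod int q, u2 mod int q) + snd x * snd (u1 mod int q, u2 mod int q))"
    by simp
qed

definition hq :: "nat \<Rightarrow> int \<times> int \<times> int \<times> int \<Rightarrow> int \<times> int \<Rightarrow> int \<times> int" where
  "hq q \<theta> \<xi> = (case \<theta> of (a,b,c,d) \<Rightarrow>
     ((a * fst \<xi> + c * snd \<xi>) mod int q, (b * fst \<xi> + d * snd \<xi>) mod int q))"

lemma hq_plane: "q > 0 \<Longrightarrow> hq q \<theta> \<xi> \<in> plane q"
  by (cases \<theta>) (auto simp: hq_def plane_def Fq_def)

lemma second_fourier:
  assumes "q > 0" "E \<subseteq> plane q"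
  shows "(\<Sum>\<tau>\<in>plane q. real (nu q E \<theta> \<tau>) ^ 2) =
    (\<Sum>\<xi>\<in>plane q. cmod (BB q E (hq q \<theta> \<xi>)) ^ 2 * cmod (BB q E \<xi>) ^ 2) / real q ^ 2"
proof -
  obtain a b c d where th: "\<theta> = (a,b,c,d)" by (cases \<theta>) auto
  define P where "P = (\<lambda>\<xi>::int\<times>int. \<lambda>x x'::int\<times>int.
      (a * fst \<xi> + c * snd \<xi>) * (fst x' - fst x) + (b * fst \<xi> + d * snd \<xi>) * (snd x' - snd x))"
  define Q where "Q = (\<lambda>\<xi>::int\<times>int. \<lambda>y y'::int\<times>int.
      fst \<xi> * (fst y' - fst y) + snd \<xi> * (snd y' - snd y))"
  define F where "F = (\<lambda>\<xi>. \<Sum>x\<in>E. \<Sum>x'\<in>E. ee q (P \<xi> x x'))"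
  define G where "G = (\<lambda>\<xi>. \<Sum>y\<in>E. \<Sum>y'\<in>E. cnj (ee q (Q \<xi> y y')))"
  have qne: "(of_nat q :: complex) \<noteq> 0" using assms(1) by simp
  have ind: "(of_bool (rigid_app q \<theta> (tau0 q \<theta> x y) x' = y') :: complex) =
      (\<Sum>\<xi>\<in>plane q. ee q (P \<xi> x x') * cnj (ee q (Q \<xi> y y'))) / of_nat q ^ 2"
    if "y' \<in> plane q" for x x' y y'
  proof -
    define w1 where "w1 = a * (fst x' - fst x) + b * (snd x' - snd x) - (fst y' - fst y)"
    define w2 where "w2 = c * (fst x' - fst x) + d * (snd x' - snd x) - (snd y' - snd y)"
    have "(of_bool (rigid_app q \<theta> (tau0 q \<theta> x y) x' = y') :: complex) =
          of_bool (int q dvd w1 \<and> int q dvd w2)"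
      using cond_eq[OF that th] by (simp add: w1_def w2_def)
    also have "\<dots> = (\<Sum>\<xi>\<in>plane q. ee q (fst \<xi> * w1 + snd \<xi> * w2)) / of_nat q ^ 2"
      using ee_sum2[OF assms(1), of w1 w2] qne by simp
    also have "\<dots> = (\<Sum>\<xi>\<in>plane q. ee q (P \<xi> x x') * cnj (ee q (Q \<xi> y y'))) / of_nat q ^ 2"
    proof -
      have "fst \<xi> * w1 + snd \<xi> * w2 = P \<xi> x x' - Q \<xi> y y'" for \<xi>
        by (simp add: w1_def w2_def P_def Q_def algebra_simps)
      then show ?thesis by (simp add: ee_diff)
    qed
    finally show ?thesis .
  qed
  have "complex_of_real (\<Sum>\<tau>\<in>plane q. real (nu q E \<theta> \<tau>) ^ 2) =
    (\<Sum>x\<in>E. \<Sum>x'\<in>E. \<Sum>y\<in>E. \<Sum>y'\<in>E. (of_bool (rigid_app q \<theta> (tau0 q \<theta> x y) x' = y') :: complex))"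
    by (simp only: nu_second[OF assms] of_real_sum) (intro sum.cong refl, simp add: of_bool_def)
  also have "\<dots> = (\<Sum>x\<in>E. \<Sum>x'\<in>E. \<Sum>y\<in>E. \<Sum>y'\<in>E.
      (\<Sum>\<xi>\<in>plane q. ee q (P \<xi> x x') * cnj (ee q (Q \<xi> y y'))) / of_nat q ^ 2)"
    by (intro sum.cong refl ind) (use assms(2) in auto)
  also have "\<dots> = (\<Sum>\<xi>\<in>plane q. \<Sum>x\<in>E. \<Sum>x'\<in>E. \<Sum>y\<in>E. \<Sum>y'\<in>E.
      ee q (P \<xi> x x') * cnj (ee q (Q \<xi> y y'))) / of_nat q ^ 2"
    by (simp only: sum_divide_distrib[symmetric] sum.swap[where B = "plane q"])
  also have "\<dots> = (\<Sum>\<xi>\<in>plane q. F \<xi> * G \<xi>) / of_nat q ^ 2"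
  proof -
    have "F \<xi> * G \<xi> = (\<Sum>x\<in>E. \<Sum>x'\<in>E. \<Sum>y\<in>E. \<Sum>y'\<in>E.
      ee q (P \<xi> x x') * cnj (ee q (Q \<xi> y y')))" for \<xi>
      unfolding F_def G_def by (simp only: sum_distrib_right) (simp only: sum_distrib_left)
    then show ?thesis by simp
  qed
  also have "\<dots> = (\<Sum>\<xi>\<in>plane q. complex_of_real (cmod (BB q E (hq q \<theta> \<xi>)) ^ 2 * cmod (BB q E \<xi>) ^ 2)) / of_nat q ^ 2"
  proof -
    have "F \<xi> = complex_of_real (cmod (BB q E (hq q \<theta> \<xi>)) ^ 2)" for \<xi>
    proof -
      have "BB q E (hq q \<theta> \<xi>) = BB q E (a * fst \<xi> + c * snd \<xi>, b * fst \<xi> + d * snd \<xi>)"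
        using BB_mod[OF assms(1)] by (simp add: hq_def th)
      moreover have "F \<xi> = complex_of_real (cmod (BB q E (a * fst \<xi> + c * snd \<xi>, b * fst \<xi> + d * snd \<xi>)) ^ 2)"
        unfolding F_def P_def BB_norm2 by (subst sum.swap) simp
      ultimately show ?thesis by simp
    qed
    moreover have "G \<xi> = complex_of_real (cmod (BB q E \<xi>) ^ 2)" for \<xi>
    proof -
      have "G \<xi> = cnj (\<Sum>y'\<in>E. \<Sum>y\<in>E. ee q (Q \<xi> y y'))"
        unfolding G_def cnj_sum by (subst sum.swap) simp
      also have "\<dots> = cnj (complex_of_real (cmod (BB q E \<xi>) ^ 2))"
        unfolding BB_norm2 Q_def by simp
      finally show ?thesis by simp
    qed
    ultimately show ?thesis by simp
  qed
  also have "\<dots> = complex_of_real ((\<Sum>\<xi>\<in>plane q. cmod (BB q E (hq q \<theta> \<xi>)) ^ 2 * cmod (BB q E \<xi>) ^ 2) / real q ^ 2)"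
    by simp
  finally show ?thesis by (simp only: of_real_eq_iff)
qed

lemma plane_nonzero:
  assumes "\<xi> \<in> plane q" "\<xi> \<noteq> (0,0)"
  shows "\<not> (int q dvd fst \<xi> \<and> int q dvd snd \<xi>)"
proof
  assume h: "int q dvd fst \<xi> \<and> int q dvd snd \<xi>"
  have z: "(0::int) \<in> Fq q" using assms(1) by (auto simp: plane_def Fq_def)
  have "fst \<xi> = 0" using Fq_dvd_eq[of "fst \<xi>" q 0] h z assms(1) by (auto simp: plane_def)
  moreover have "snd \<xi> = 0" using Fq_dvd_eq[of "snd \<xi>" q 0] h z assms(1) by (auto simp: plane_def)
  ultimately show False using assms(2) by (simp add: prod_eq_iff)
qed

lemma mod_eq_imp_dvd: "(A::int) mod int q = h \<Longrightarrow> int q dvd A - h"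
  by (metis minus_mod_eq_mult_div dvd_triv_left)

lemma fiber_card:
  assumes "prime q" "q mod 4 = 3" "\<xi> \<in> plane q" "\<xi> \<noteq> (0,0)"
  shows "card {\<theta>\<in>O2 q. hq q \<theta> \<xi> = \<eta>} \<le> 4"
proof -
  define f where "f = (\<lambda>(a::int,b::int,c::int,d::int). ((a,c),(b,d)))"
  define L1 where "L1 = lcset q (fst \<xi>) (snd \<xi>) (fst \<eta>)"
  define L2 where "L2 = lcset q (fst \<xi>) (snd \<xi>) (snd \<eta>)"
  have nz: "\<not> (int q dvd fst \<xi> \<and> int q dvd snd \<xi>)" by (rule plane_nonzero[OF assms(3,4)])
  have inj: "inj_on f {\<theta>\<in>O2 q. hq q \<theta> \<xi> = \<eta>}" unfolding f_def by (auto simp: inj_on_def)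
  have sub: "f ` {\<theta>\<in>O2 q. hq q \<theta> \<xi> = \<eta>} \<subseteq> L1 \<times> L2"
  proof (rule image_subsetI)
    fix \<theta> assume "\<theta> \<in> {\<theta>\<in>O2 q. hq q \<theta> \<xi> = \<eta>}"
    then obtain a b c d where th: "\<theta> = (a,b,c,d)" "a \<in> Fq q" "b \<in> Fq q" "c \<in> Fq q" "d \<in> Fq q"
      "(a*a + c*c) mod int q = 1 mod int q" "(b*b + d*d) mod int q = 1 mod int q"
      "hq q \<theta> \<xi> = \<eta>" unfolding O2_def by (cases \<theta>) auto
    have h1: "(a * fst \<xi> + c * snd \<xi>) mod int q = fst \<eta>"
     and h2: "(b * fst \<xi> + d * snd \<xi>) mod int q = snd \<eta>"
      using th(1,8) by (auto simp: hq_def)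
    have "(a,c) \<in> L1" using th mod_eq_imp_dvd[OF h1] by (simp add: L1_def lcset_def mod_eq_1_dvd)
    moreover have "(b,d) \<in> L2" using th mod_eq_imp_dvd[OF h2] by (simp add: L2_def lcset_def mod_eq_1_dvd)
    ultimately show "f \<theta> \<in> L1 \<times> L2" using th by (simp add: f_def)
  qed
  have "card {\<theta>\<in>O2 q. hq q \<theta> \<xi> = \<eta>} = card (f ` {\<theta>\<in>O2 q. hq q \<theta> \<xi> = \<eta>})"
    using inj by (simp add: card_image)
  also have "\<dots> \<le> card (L1 \<times> L2)" using sub by (intro card_mono) (auto simp: L1_def L2_def)
  also have "\<dots> = card L1 * card L2" by (simp add: card_cartesian_product)
  also have "\<dots> \<le> 2 * 2" using lcset_card[OF assms(1,2) nz] unfolding L1_def L2_def by (intro mult_le_mono) auto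
  finally show ?thesis by simp
qed

lemma sum_fiber:
  assumes "prime q" "q mod 4 = 3" "\<xi> \<in> plane q" "\<xi> \<noteq> (0,0)" "\<And>\<eta>. f \<eta> \<ge> (0::real)"
  shows "(\<Sum>\<theta>\<in>O2 q. f (hq q \<theta> \<xi>)) \<le> 4 * (\<Sum>\<eta>\<in>plane q. f \<eta>)"
proof -
  have q0: "q > 0" using assms(1) prime_gt_0_nat by blast
  have "(\<Sum>\<theta>\<in>O2 q. f (hq q \<theta> \<xi>)) =
       (\<Sum>\<eta>\<in>(\<lambda>\<theta>. hq q \<theta> \<xi>) ` O2 q. \<Sum>\<theta>\<in>{\<theta>. \<theta> \<in> O2 q \<and> hq q \<theta> \<xi> = \<eta>}. f (hq q \<theta> \<xi>))"
    by (rule sum.image_gen) simp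
  also have "\<dots> = (\<Sum>\<eta>\<in>(\<lambda>\<theta>. hq q \<theta> \<xi>) ` O2 q. real (card {\<theta>\<in>O2 q. hq q \<theta> \<xi> = \<eta>}) * f \<eta>)"
    by (intro sum.cong refl) simp
  also have "\<dots> \<le> (\<Sum>\<eta>\<in>(\<lambda>\<theta>. hq q \<theta> \<xi>) ` O2 q. 4 * f \<eta>)"
  proof (rule sum_mono)
    fix \<eta>
    have "real (card {\<theta>\<in>O2 q. hq q \<theta> \<xi> = \<eta>}) \<le> 4"
      using fiber_card[OF assms(1-4), of \<eta>] by simp
    then show "real (card {\<theta>\<in>O2 q. hq q \<theta> \<xi> = \<eta>}) * f \<eta> \<le> 4 * f \<eta>"
      using assms(5)[of \<eta>] by (intro mult_right_mono) auto
  qed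
  also have "\<dots> \<le> (\<Sum>\<eta>\<in>plane q. 4 * f \<eta>)"
  proof (rule sum_mono2)
    show "(\<lambda>\<theta>. hq q \<theta> \<xi>) ` O2 q \<subseteq> plane q" using hq_plane[OF q0] by blast
  qed (use assms(5) in auto)
  finally show ?thesis by (simp add: sum_distrib_left)
qed

lemma D_bound:
  assumes "prime q" "q mod 4 = 3" "E \<subseteq> plane q"
  shows "(\<Sum>\<theta>\<in>O2 q. (\<Sum>\<tau>\<in>plane q. real (nu q E \<theta> \<tau>) ^ 2) - real (card E) ^ 4 / real q ^ 2)
          \<le> 4 * real q ^ 2 * real (card E) ^ 2"
proof -
  have q0: "q > 0" using assms(1) prime_gt_0_nat by blast
  define n where "n = real (card E)"
  define Bn where "Bn = (\<lambda>\<xi>. cmod (BB q E \<xi>) ^ 2)"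
  define Z where "Z = plane q - {(0,0)}"
  have Bn0: "Bn (0,0) = n^2" by (simp add: Bn_def BB_def n_def)
  have Bnn: "Bn \<xi> \<ge> 0" for \<xi> by (simp add: Bn_def)
  have zp: "(0::int,0::int) \<in> plane q" using q0 by (simp add: plane_def Fq_def)
  have hq0: "hq q \<theta> (0,0) = (0,0)" for \<theta> by (cases \<theta>) (simp add: hq_def)
  have each: "(\<Sum>\<tau>\<in>plane q. real (nu q E \<theta> \<tau>) ^ 2) - real (card E) ^ 4 / real q ^ 2
        = (\<Sum>\<xi>\<in>Z. Bn (hq q \<theta> \<xi>) * Bn \<xi>) / real q ^ 2" for \<theta>
  proof -
    have "(\<Sum>\<xi>\<in>plane q. Bn (hq q \<theta> \<xi>) * Bn \<xi>) = Bn (hq q \<theta> (0,0)) * Bn (0,0) + (\<Sum>\<xi>\<in>Z. Bn (hq q \<theta> \<xi>) * Bn \<xi>)"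
      unfolding Z_def by (rule sum.remove[OF finite_plane zp])
    also have "\<dots> = n^4 + (\<Sum>\<xi>\<in>Z. Bn (hq q \<theta> \<xi>) * Bn \<xi>)" by (simp add: hq0 Bn0 power2_eq_square power4_eq_xxxx)
    finally show ?thesis using second_fourier[OF q0 assms(3), of \<theta>]
      by (simp add: Bn_def n_def add_divide_distrib)
  qed
  have "(\<Sum>\<theta>\<in>O2 q. (\<Sum>\<tau>\<in>plane q. real (nu q E \<theta> \<tau>) ^ 2) - real (card E) ^ 4 / real q ^ 2)
      = (\<Sum>\<xi>\<in>Z. Bn \<xi> * (\<Sum>\<theta>\<in>O2 q. Bn (hq q \<theta> \<xi>))) / real q ^ 2"
    by (simp add: each sum_divide_distrib[symmetric] sum_distrib_left sum.swap[where A = "O2 q"] mult.commute)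
  also have "\<dots> \<le> (\<Sum>\<xi>\<in>Z. Bn \<xi> * (4 * (real q ^ 2 * n))) / real q ^ 2"
  proof (intro divide_right_mono sum_mono mult_left_mono)
    fix \<xi> assume "\<xi> \<in> Z"
    then have "\<xi> \<in> plane q" "\<xi> \<noteq> (0,0)" by (auto simp: Z_def)
    then have "(\<Sum>\<theta>\<in>O2 q. Bn (hq q \<theta> \<xi>)) \<le> 4 * (\<Sum>\<eta>\<in>plane q. Bn \<eta>)"
      using sum_fiber[OF assms(1,2)] Bnn by blast
    also have "(\<Sum>\<eta>\<in>plane q. Bn \<eta>) = real q ^ 2 * n"
      using plancherel[OF q0 assms(3)] by (simp add: Bn_def n_def)
    finally show "(\<Sum>\<theta>\<in>O2 q. Bn (hq q \<theta> \<xi>)) \<le> 4 * (real q ^ 2 * n)" .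
  qed (auto simp: Bnn)
  also have "\<dots> = 4 * n * (\<Sum>\<xi>\<in>Z. Bn \<xi>)"
  proof -
    have "(\<Sum>\<xi>\<in>Z. Bn \<xi> * (4 * (real q ^ 2 * n))) = (\<Sum>\<xi>\<in>Z. Bn \<xi>) * (4 * (real q ^ 2 * n))"
      by (simp add: sum_distrib_right)
    then show ?thesis using q0 by simp
  qed
  also have "\<dots> \<le> 4 * n * (\<Sum>\<xi>\<in>plane q. Bn \<xi>)"
    by (intro mult_left_mono sum_mono2) (auto simp: Z_def Bnn n_def)
  also have "\<dots> = 4 * real q ^ 2 * real (card E) ^ 2"
    using plancherel[OF q0 assms(3)] by (simp add: Bn_def n_def power2_eq_square)
  finally show ?thesis .
qed

lemma cube_bound:
  fixes v :: "'a \<Rightarrow> real"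
  assumes "finite I" "\<And>i. i \<in> I \<Longrightarrow> 0 \<le> v i \<and> v i \<le> N" "(\<Sum>i\<in>I. v i) = real (card I) * M"
    "0 \<le> M" "M \<le> N"
  shows "(\<Sum>i\<in>I. v i ^ 3) \<le> 3 * N * ((\<Sum>i\<in>I. v i ^ 2) - real (card I) * M^2) + real (card I) * M^3"
proof -
  define D where "D = (\<Sum>i\<in>I. v i ^ 2) - real (card I) * M^2"
  have Dsq: "(\<Sum>i\<in>I. (v i - M)^2) = D"
  proof -
    have "(\<Sum>i\<in>I. (v i - M)^2) = (\<Sum>i\<in>I. v i ^ 2) - 2 * M * (\<Sum>i\<in>I. v i) + real (card I) * M^2"
    proof -
      have "(v i - M)^2 = v i ^ 2 - (2 * M) * v i + M^2" for i by (simp add: power2_diff algebra_simps)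
      then show ?thesis by (simp add: sum.distrib sum_subtractf sum_distrib_left[symmetric])
    qed
    then show ?thesis using assms(3) by (simp add: D_def power2_eq_square)
  qed
  have D0: "D \<ge> 0" using Dsq[symmetric] by (simp add: sum_nonneg)
  have eq1: "(\<Sum>i\<in>I. v i ^ 3) = (\<Sum>i\<in>I. v i * (v i - M)^2) + (2 * M * (\<Sum>i\<in>I. v i ^ 2) - M^2 * (\<Sum>i\<in>I. v i))"
  proof -
    have "v i ^ 3 = v i * (v i - M)^2 + 2 * M * v i ^ 2 - M^2 * v i" for i
      by (simp add: power2_eq_square power3_eq_cube algebra_simps)
    then show ?thesis by (simp add: sum.distrib sum_subtractf sum_distrib_left)
  qed
  have A: "(\<Sum>i\<in>I. v i * (v i - M)^2) \<le> N * D"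
  proof -
    have "(\<Sum>i\<in>I. v i * (v i - M)^2) \<le> (\<Sum>i\<in>I. N * (v i - M)^2)"
      using assms(2) by (intro sum_mono mult_right_mono) auto
    also have "(\<Sum>i\<in>I. N * (v i - M)^2) = N * D" by (simp only: sum_distrib_left[symmetric] Dsq)
    finally show ?thesis .
  qed
  have B: "2 * M * (\<Sum>i\<in>I. v i ^ 2) - M^2 * (\<Sum>i\<in>I. v i) = 2 * M * D + real (card I) * M^3"
    using assms(3) by (simp add: D_def algebra_simps power2_eq_square power3_eq_cube)
  have "(\<Sum>i\<in>I. v i ^ 3) \<le> N * D + 2 * M * D + real (card I) * M^3" using eq1 A B by linarith
  also have "\<dots> \<le> 3 * N * D + real (card I) * M^3"
  proof -
    have "M * D \<le> N * D" using D0 assms(5) by (intro mult_right_mono) auto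
    moreover have "0 \<le> N" using assms(4,5) by simp
    ultimately show ?thesis using D0 by (simp add: algebra_simps)
  qed
  finally show ?thesis by (simp add: D_def)
qed

lemma sum_sq_card:
  fixes c :: "'a \<Rightarrow> real"
  assumes "finite I"
  shows "(\<Sum>i\<in>I. c i)^2 \<le> real (card I) * (\<Sum>i\<in>I. c i ^ 2)"
proof -
  have "0 \<le> (\<Sum>i\<in>I. \<Sum>j\<in>I. (c i - c j)^2)" by (intro sum_nonneg) auto
  also have "\<dots> = (\<Sum>i\<in>I. \<Sum>j\<in>I. c i ^ 2 + c j ^ 2 - 2 * (c i * c j))"
    by (intro sum.cong refl) (simp add: power2_diff)
  also have "\<dots> = (\<Sum>i\<in>I. \<Sum>j\<in>I. c i ^ 2) + (\<Sum>i\<in>I. \<Sum>j\<in>I. c j ^ 2) - 2 * (\<Sum>i\<in>I. \<Sum>j\<in>I. c i * c j)"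
    by (simp only: sum.distrib sum_subtractf sum_distrib_left)
  also have "(\<Sum>i\<in>I. \<Sum>j\<in>I. c i ^ 2) = real (card I) * (\<Sum>i\<in>I. c i ^ 2)"
    by (simp add: sum_distrib_left)
  also have "(\<Sum>i\<in>I. \<Sum>j\<in>I. c j ^ 2) = real (card I) * (\<Sum>i\<in>I. c i ^ 2)"
    by simp
  also have "(\<Sum>i\<in>I. \<Sum>j\<in>I. c i * c j) = (\<Sum>i\<in>I. c i)^2"
    by (simp only: sum_product[symmetric] power2_eq_square)
  finally show ?thesis by simp
qed

lemma cs_fiber:
  assumes "finite A"
  shows "real (card A) ^ 2 \<le> real (card (f ` A)) * real (card {p \<in> A \<times> A. f (fst p) = f (snd p)})"
proof -
  define fib where "fib = (\<lambda>b. {x\<in>A. f x = b})"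
  have fin: "finite (fib b)" for b using assms by (simp add: fib_def)
  have "card A = (\<Sum>x\<in>A. 1)" by simp
  also have "\<dots> = (\<Sum>b\<in>f ` A. \<Sum>x\<in>{x. x \<in> A \<and> f x = b}. 1)" by (rule sum.image_gen[OF assms])
  also have "\<dots> = (\<Sum>b\<in>f ` A. card (fib b))" by (simp add: fib_def)
  finally have cA: "real (card A) = (\<Sum>b\<in>f ` A. real (card (fib b)))" by simp
  have "{p \<in> A \<times> A. f (fst p) = f (snd p)} = (\<Union>b\<in>f ` A. fib b \<times> fib b)"
    by (auto simp: fib_def)
  moreover have "card (\<Union>b\<in>f ` A. fib b \<times> fib b) = (\<Sum>b\<in>f ` A. card (fib b \<times> fib b))"
    by (rule card_UN_disjoint) (use assms fin in \<open>auto simp: fib_def\<close>)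
  ultimately have "card {p \<in> A \<times> A. f (fst p) = f (snd p)} = (\<Sum>b\<in>f ` A. card (fib b \<times> fib b))"
    by simp
  then have cP: "real (card {p \<in> A \<times> A. f (fst p) = f (snd p)}) = (\<Sum>b\<in>f ` A. real (card (fib b)) ^ 2)"
    by (simp add: card_cartesian_product power2_eq_square)
  show ?thesis unfolding cA cP using assms by (intro sum_sq_card) simp
qed

definition tmap :: "nat \<Rightarrow> int \<times> int \<times> int \<times> int \<Rightarrow> int \<times> int \<Rightarrow> tri \<Rightarrow> tri" where
  "tmap q \<theta> \<tau> s = (case s of (x1,x2,x3) \<Rightarrow> (rigid_app q \<theta> \<tau> x1, rigid_app q \<theta> \<tau> x2, rigid_app q \<theta> \<tau> x3))"

lemma Q_bound:
  assumes "finite E"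
  shows "real (card {p \<in> (E \<times> E \<times> E) \<times> (E \<times> E \<times> E). congruent q (fst p) (snd p)})
     \<le> (\<Sum>\<theta>\<in>O2 q. \<Sum>\<tau>\<in>plane q. real (nu q E \<theta> \<tau>) ^ 3)"
proof -
  define P where "P = E \<times> E \<times> E"
  define U where "U = (\<lambda>g::(int \<times> int \<times> int \<times> int) \<times> (int \<times> int).
     (\<lambda>s. (s, tmap q (fst g) (snd g) s)) ` {s\<in>P. tmap q (fst g) (snd g) s \<in> P})"
  have sub: "{p \<in> P \<times> P. congruent q (fst p) (snd p)} \<subseteq> (\<Union>g\<in>O2 q \<times> plane q. U g)"
  proof
    fix p assume "p \<in> {p \<in> P \<times> P. congruent q (fst p) (snd p)}"
    then obtain s t where p: "p = (s,t)" "s \<in> P" "t \<in> P" "congruent q s t" by auto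
    then obtain \<theta> \<tau> where g: "\<theta> \<in> O2 q" "\<tau> \<in> plane q" "t = tmap q \<theta> \<tau> s"
      unfolding congruent_def tmap_def by (cases s, cases t) auto
    then have "p \<in> U (\<theta>,\<tau>)" using p by (auto simp: U_def)
    then show "p \<in> (\<Union>g\<in>O2 q \<times> plane q. U g)" using g by blast
  qed
  have cardU: "card (U (\<theta>,\<tau>)) \<le> nu q E \<theta> \<tau> ^ 3" for \<theta> \<tau>
  proof -
    define S where "S = {x\<in>E. rigid_app q \<theta> \<tau> x \<in> E}"
    have "{s\<in>P. tmap q \<theta> \<tau> s \<in> P} = S \<times> S \<times> S"
      by (auto simp: P_def S_def tmap_def)
    then have "card {s\<in>P. tmap q \<theta> \<tau> s \<in> P} = card S ^ 3"
      by (simp add: card_cartesian_product power3_eq_cube)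
    moreover have "card (U (\<theta>,\<tau>)) \<le> card {s\<in>P. tmap q \<theta> \<tau> s \<in> P}"
      unfolding U_def by (simp add: card_image_le assms P_def)
    ultimately show ?thesis by (simp add: nu_def S_def)
  qed
  have fU: "finite (U g)" for g using assms by (simp add: U_def P_def)
  have "card {p \<in> P \<times> P. congruent q (fst p) (snd p)} \<le> card (\<Union>g\<in>O2 q \<times> plane q. U g)"
    using sub fU by (intro card_mono) auto
  also have "\<dots> \<le> (\<Sum>g\<in>O2 q \<times> plane q. card (U g))" by (rule card_UN_le) simp
  also have "\<dots> \<le> (\<Sum>g\<in>O2 q \<times> plane q. nu q E (fst g) (snd g) ^ 3)"
  proof (rule sum_mono)
    fix g :: "(int \<times> int \<times> int \<times> int) \<times> (int \<times> int)"
    obtain \<theta> \<tau> where "g = (\<theta>,\<tau>)" by (cases g)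
    then show "card (U g) \<le> nu q E (fst g) (snd g) ^ 3" using cardU by simp
  qed
  finally have "real (card {p \<in> P \<times> P. congruent q (fst p) (snd p)}) \<le>
      real (\<Sum>g\<in>O2 q \<times> plane q. nu q E (fst g) (snd g) ^ 3)"
    by (simp only: of_nat_le_iff)
  also have "\<dots> = (\<Sum>g\<in>O2 q \<times> plane q. real (nu q E (fst g) (snd g)) ^ 3)" by simp
  also have "\<dots> = (\<Sum>\<theta>\<in>O2 q. \<Sum>\<tau>\<in>plane q. real (nu q E \<theta> \<tau>) ^ 3)"
    by (simp add: sum.cartesian_product split_beta)
  finally show ?thesis by (simp add: P_def)
qed

lemma finite_triples[simp]: "finite (triples q)" by (simp add: triples_def)

lemma id_O2: "q \<ge> 2 \<Longrightarrow> (1,0,0,1) \<in> O2 q"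
  by (simp add: O2_def Fq_def)

lemma rigid_id: "x \<in> plane q \<Longrightarrow> rigid_app q (1,0,0,1) (0,0) x = x"
  by (cases x) (simp add: rigid_app_def plane_def Fq_def)

lemma self_class:
  assumes "q \<ge> 2" "t \<in> triples q"
  shows "t \<in> cong_class q t"
proof -
  obtain x1 x2 x3 where t: "t = (x1,x2,x3)" by (cases t) auto
  have p: "x1 \<in> plane q" "x2 \<in> plane q" "x3 \<in> plane q" using assms(2) t by (auto simp: triples_def)
  have z: "(0::int,0::int) \<in> plane q" using assms(1) by (simp add: plane_def Fq_def)
  have "congruent q t t" unfolding congruent_def t
    using id_O2[OF assms(1)] z rigid_id[OF p(1)] rigid_id[OF p(2)] rigid_id[OF p(3)] by force
  then show ?thesis using assms(2) by (simp add: cong_class_def)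
qed

lemma nu_le: "finite E \<Longrightarrow> nu q E \<theta> \<tau> \<le> card E"
  unfolding nu_def by (intro card_mono) auto

lemma card_plane: "card (plane q) = q ^ 2" by (simp add: plane_def card_cartesian_product power2_eq_square)

lemma cube_sum_bound:
  assumes "prime q" "q mod 4 = 3" "E \<subseteq> plane q"
  shows "(\<Sum>\<theta>\<in>O2 q. \<Sum>\<tau>\<in>plane q. real (nu q E \<theta> \<tau>) ^ 3)
     \<le> 12 * real q ^ 2 * real (card E) ^ 3 + 4 * real (card E) ^ 6 / real q ^ 3"
proof -
  have q0: "q > 0" using assms(1) prime_gt_0_nat by blast
  have fE: "finite E" using finite_subset[OF assms(3)] by simp
  define n where "n = real (card E)"
  define M where "M = n^2 / real q ^ 2"
  define I where "I = O2 q \<times> plane q"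
  define v where "v = (\<lambda>g. real (nu q E (fst g) (snd g)))"
  have cI: "real (card I) = real (card (O2 q)) * real q ^ 2" by (simp add: I_def card_cartesian_product card_plane)
  have split: "(\<Sum>g\<in>I. h g) = (\<Sum>\<theta>\<in>O2 q. \<Sum>\<tau>\<in>plane q. h (\<theta>,\<tau>))" for h :: "_ \<Rightarrow> real"
    by (simp add: I_def sum.cartesian_product)
  have nq: "n \<le> real q ^ 2"
  proof -
    have "card E \<le> card (plane q)" using assms(3) by (intro card_mono) auto
    then show ?thesis by (simp add: n_def card_plane)
  qed
  have n0: "n \<ge> 0" by (simp add: n_def)
  have M0: "M \<ge> 0" by (simp add: M_def)
  have MN: "M \<le> n"
  proof -
    have "n^2 \<le> n * real q ^ 2" using nq n0 by (simp add: power2_eq_square mult_left_mono)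
    then show ?thesis using q0 by (simp add: M_def divide_le_eq)
  qed
  have s1: "(\<Sum>g\<in>I. v g) = real (card I) * M"
  proof -
    have "(\<Sum>g\<in>I. v g) = (\<Sum>\<theta>\<in>O2 q. n^2)" unfolding split v_def
      using nu_first[OF q0 assms(3)] by (simp add: n_def)
    also have "\<dots> = real (card I) * M" using q0 by (simp add: cI M_def)
    finally show ?thesis .
  qed
  have cb: "(\<Sum>g\<in>I. v g ^ 3) \<le> 3 * n * ((\<Sum>g\<in>I. v g ^ 2) - real (card I) * M^2) + real (card I) * M^3"
    by (rule cube_bound[OF _ _ s1 M0 MN]) (auto simp: I_def v_def n_def nu_le[OF fE])
  have "(\<Sum>g\<in>I. v g ^ 2) - real (card I) * M^2 = (\<Sum>\<theta>\<in>O2 q. (\<Sum>\<tau>\<in>plane q. real (nu q E \<theta> \<tau>) ^ 2) - n^4 / real q ^ 2)"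
  proof -
    have "real (card I) * M^2 = (\<Sum>\<theta>\<in>O2 q. n^4 / real q ^ 2)" using q0
      by (simp add: cI M_def power2_eq_square power4_eq_xxxx field_simps)
    then show ?thesis unfolding split v_def by (simp add: sum_subtractf)
  qed
  also have "\<dots> \<le> 4 * real q ^ 2 * n ^ 2" using D_bound[OF assms] by (simp add: n_def)
  finally have Db: "(\<Sum>g\<in>I. v g ^ 2) - real (card I) * M^2 \<le> 4 * real q ^ 2 * n ^ 2" .
  have Mb: "real (card I) * M^3 \<le> 4 * n^6 / real q ^ 3"
  proof -
    have "real (card (O2 q)) \<le> 4 * real q" using O2_card[OF assms(1,2)] by linarith
    then have "real (card I) * M^3 \<le> (4 * real q) * real q ^ 2 * M^3"
      using M0 by (simp add: cI mult_right_mono)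
    also have "\<dots> = 4 * n^6 / real q ^ 3" using q0 by (simp add: M_def field_simps power_eq_if)
    finally show ?thesis .
  qed
  have "(\<Sum>g\<in>I. v g ^ 3) \<le> 3 * n * (4 * real q ^ 2 * n ^ 2) + 4 * n^6 / real q ^ 3"
    using cb Db Mb n0 by (smt (verit) mult_left_mono)
  moreover have "3 * n * (4 * real q ^ 2 * n ^ 2) = 12 * real q ^ 2 * n ^ 3"
    by (simp add: power2_eq_square power3_eq_cube)
  ultimately have "(\<Sum>g\<in>I. v g ^ 3) \<le> 12 * real q ^ 2 * n ^ 3 + 4 * n^6 / real q ^ 3" by simp
  then show ?thesis unfolding split v_def by (simp add: n_def)
qed

lemma main_bound:
  assumes "prime q" "q mod 4 = 3" "E \<subseteq> plane q"
  shows "real (card E) ^ 6 \<le> real (card (T2 q E)) *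
      (12 * real q ^ 2 * real (card E) ^ 3 + 4 * real (card E) ^ 6 / real q ^ 3)"
proof -
  have q2: "q \<ge> 2" using assms(1) prime_ge_2_nat by blast
  have fE: "finite E" using finite_subset[OF assms(3)] by simp
  define P where "P = E \<times> E \<times> E"
  have fP: "finite P" using fE by (simp add: P_def)
  have Ptr: "P \<subseteq> triples q" using assms(3) by (auto simp: P_def triples_def)
  have h1: "real (card P) ^ 2 \<le> real (card (cong_class q ` P)) *
      real (card {p \<in> P \<times> P. cong_class q (fst p) = cong_class q (snd p)})"
    by (rule cs_fiber[OF fP])
  have h2: "real (card (cong_class q ` P)) \<le> real (card (T2 q E))"
  proof -
    have "cong_class q ` P \<subseteq> T2 q E"
    proof
      fix C assume "C \<in> cong_class q ` P"
      then obtain t where t: "t \<in> P" "C = cong_class q t" by auto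
      have "t \<in> triples q" using t Ptr by blast
      then have "t \<in> C" using self_class[OF q2] t by simp
      then show "C \<in> T2 q E" using t Ptr by (auto simp: T2_def P_def)
    qed
    moreover have "finite (T2 q E)"
      by (rule finite_subset[of _ "cong_class q ` triples q"]) (auto simp: T2_def)
    ultimately show ?thesis by (simp add: card_mono)
  qed
  have h3: "real (card {p \<in> P \<times> P. cong_class q (fst p) = cong_class q (snd p)})
      \<le> real (card {p \<in> P \<times> P. congruent q (fst p) (snd p)})"
  proof -
    have "{p \<in> P \<times> P. cong_class q (fst p) = cong_class q (snd p)} \<subseteq> {p \<in> P \<times> P. congruent q (fst p) (snd p)}"
    proof
      fix p assume h: "p \<in> {p \<in> P \<times> P. cong_class q (fst p) = cong_class q (snd p)}"
      then have "snd p \<in> triples q" using Ptr by auto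
      then have "snd p \<in> cong_class q (snd p)" using self_class[OF q2] by simp
      then have "snd p \<in> cong_class q (fst p)" using h by simp
      then show "p \<in> {p \<in> P \<times> P. congruent q (fst p) (snd p)}" using h by (simp add: cong_class_def)
    qed
    then show ?thesis using fP by (simp add: card_mono)
  qed
  also have "real (card {p \<in> P \<times> P. congruent q (fst p) (snd p)}) \<le>
      (\<Sum>\<theta>\<in>O2 q. \<Sum>\<tau>\<in>plane q. real (nu q E \<theta> \<tau>) ^ 3)"
    using Q_bound[OF fE] by (simp add: P_def)
  also have "\<dots> \<le> 12 * real q ^ 2 * real (card E) ^ 3 + 4 * real (card E) ^ 6 / real q ^ 3"
    by (rule cube_sum_bound[OF assms])
  finally have h4: "real (card {p \<in> P \<times> P. cong_class q (fst p) = cong_class q (snd p)})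
     \<le> 12 * real q ^ 2 * real (card E) ^ 3 + 4 * real (card E) ^ 6 / real q ^ 3" .
  have "real (card P) ^ 2 \<le> real (card (T2 q E)) * (12 * real q ^ 2 * real (card E) ^ 3 + 4 * real (card E) ^ 6 / real q ^ 3)"
    using h1 mult_mono[OF h2 h4] by simp
  moreover have "real (card P) = real (card E) ^ 3"
    by (simp add: P_def card_cartesian_product power3_eq_cube)
  moreover have "(real (card E) ^ 3) ^ 2 = real (card E) ^ 6" by (simp flip: power_mult)
  ultimately show ?thesis by simp
qed

theorem theorem1p1:
  fixes C1 :: real
  assumes "C1 > root 4 2"
  shows "\<exists>C2 > 0. \<forall>(q::nat) (E::(int \<times> int) set).
           prime q \<longrightarrow> q mod 4 = 3 \<longrightarrow> E \<subseteq> plane q \<longrightarrow>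
           real (card E) > C1 * real q powr (7/4) \<longrightarrow>
           real (card (T2 q E)) \<ge> C2 * real q ^ 3"
proof -
  have "root 4 2 > (0::real)" by simp
  then have C1p: "C1 > 0" using assms by linarith
  define K where "K = 4 + 12 / C1^3"
  have Kp: "K > 0" using C1p by (simp add: K_def add_pos_nonneg)
  show ?thesis
  proof (intro exI[of _ "1 / K"] conjI allI impI)
    show "1 / K > 0" using Kp by simp
    fix q :: nat and E :: "(int \<times> int) set"
    assume pq: "prime q" and q4: "q mod 4 = 3" and Ep: "E \<subseteq> plane q"
       and big: "real (card E) > C1 * real q powr (7/4)"
    define x where "x = real q"
    define n where "n = real (card E)"
    define T where "T = real (card (T2 q E))"
    have x1: "x \<ge> 1" using prime_ge_2_nat[OF pq] by (simp add: x_def)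
    have R: "x powr (5/3) \<le> x powr (7/4)" using x1 by (intro powr_mono) auto
    have R3: "(x powr (5/3)) ^ 3 = x ^ 5"
    proof -
      have "(x powr (5/3)) ^ 3 = x powr (of_nat 3 * (5/3))" using x1 by (intro powr_power) auto
      also have "\<dots> = x powr 5" by simp
      also have "\<dots> = x ^ 5" using x1 by simp
      finally show ?thesis .
    qed
    have "C1 * x powr (5/3) \<le> C1 * x powr (7/4)" using R C1p by (intro mult_left_mono) auto
    then have nb: "C1 * x powr (5/3) \<le> n" using big unfolding n_def x_def by linarith
    have n3: "C1^3 * x^5 \<le> n^3"
    proof -
      have "(C1 * x powr (5/3))^3 \<le> n^3" using nb C1p by (intro power_mono) auto
      then show ?thesis by (simp add: power_mult_distrib R3)
    qed
    have "C1 * x powr (7/4) > 0" using C1p x1 by (intro mult_pos_pos) auto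
    then have npos: "n > 0" using big unfolding n_def x_def by linarith
    have mb: "n^6 \<le> T * (12 * x^2 * n^3 + 4 * n^6 / x^3)"
      using main_bound[OF pq q4 Ep] by (simp add: n_def T_def x_def)
    have t1: "12 * x^2 * n^3 \<le> 12 / C1^3 * (n^6 / x^3)"
    proof -
      have "C1^3 * x^5 * n^3 \<le> n^3 * n^3" using n3 npos by (intro mult_right_mono) auto
      then have "C1^3 * x^5 * n^3 \<le> n^6" by (simp flip: power_add)
      moreover have "C1^3 * x^5 * n^3 = (x^2 * n^3) * (C1^3 * x^3)"
      proof -
        have "x^5 = x^2 * x^3" by (simp flip: power_add)
        then show ?thesis by (simp add: algebra_simps)
      qed
      ultimately have h: "(x^2 * n^3) * (C1^3 * x^3) \<le> n^6" by simp
      have cx: "C1^3 * x^3 > 0" using C1p x1 by simp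
      have "x^2 * n^3 \<le> n^6 / (C1^3 * x^3)" using h cx by (simp add: pos_le_divide_eq)
      then show ?thesis by (simp add: field_simps)
    qed
    have T0: "T \<ge> 0" by (simp add: T_def)
    have "n^6 \<le> T * (K * (n^6 / x^3))"
    proof -
      have "12 * x^2 * n^3 + 4 * n^6 / x^3 \<le> K * (n^6 / x^3)"
        using t1 by (simp add: K_def algebra_simps)
      then have "T * (12 * x^2 * n^3 + 4 * n^6 / x^3) \<le> T * (K * (n^6 / x^3))"
        using T0 by (rule mult_left_mono)
      then show ?thesis using mb by linarith
    qed
    moreover have "T * (K * (n^6 / x^3)) = n^6 * (T * K / x^3)" by simp
    ultimately have "n^6 * 1 \<le> n^6 * (T * K / x^3)" by (simp only: mult_1_right)
    moreover have n6: "n^6 > 0" using npos by simp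
    ultimately have "1 \<le> T * K / x^3" using mult_le_cancel_left_pos[OF n6, of 1 "T * K / x^3"] by blast
    then have "x^3 \<le> T * K" using x1 by (simp add: field_simps)
    then have "1 / K * x^3 \<le> T" using Kp by (simp add: field_simps)
    then show "1 / K * real q ^ 3 \<le> real (card (T2 q E))" by (simp add: x_def T_def)
  qed
qed

end
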